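(* Let $2<\alpha<4$ and $c\ge 1$. For $N_1>0$ set $N_2=cN_1$, and let $(\Lambda_1^*,\Lambda_2^* )$ be the Nash equilibrium of the two-player Random Access Game in which player $i\in\{1,2\}$ chooses $\Lambda_i\in[0,N_i]$ and receives payoff \[ U_i(\Lambda_1,\Lambda_2)=\sup_{\beta>0}\ \Lambda_i\log(1+\beta)\,e^{-(\Lambda_1+\Lambda_2)\beta^{2/\alpha}} . \] Then, in the limit $N_1\to\infty$, the equilibrium is \[ (\Lambda_1^*,\Lambda_2^* )=\begin{cases}(N_1,N_2), & N_1\le N_2\le \frac{2}{\alpha-2}N_1,\\[2pt] \left(N_1,\frac{2}{\alpha-2}N_1\right), & \frac{2}{\alpha-2}N_1\le N_2,\end{cases} \] in the sense that $\Lambda_1^*=N_1$ and $\Lambda_2^*/N_1\to\min\!\left(c,\frac{2}{\alpha-2}\right)$ as $N_1\to\infty$.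
   Context: A Nash equilibrium is a pair $(\Lambda_1^*,\Lambda_2^* )\in[0,N_1]\times[0,N_2]$ such that $\Lambda_1^*$ maximizes $U_1(\cdot,\Lambda_2^* )$ over $[0,N_1]$ and $\Lambda_2^*$ maximizes $U_2(\Lambda_1^*,\cdot)$ over $[0,N_2]$. Here $\log$ is the natural logarithm. *)

theory Defs
  imports "HOL-Analysis.Analysis"
begin

definition rag_payoff :: "real \<Rightarrow> real \<Rightarrow> real \<Rightarrow> real \<Rightarrow> real" where
  "rag_payoff \<alpha> \<Lambda>i \<Lambda>1 \<Lambda>2 =
     Sup {\<Lambda>i * ln (1 + \<beta>) * exp (- (\<Lambda>1 + \<Lambda>2) * \<beta> powr (2 / \<alpha>)) | \<beta>. \<beta> > 0}"

definition U1 :: "real \<Rightarrow> real \<Rightarrow> real \<Rightarrow> real" where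
  "U1 \<alpha> \<Lambda>1 \<Lambda>2 = rag_payoff \<alpha> \<Lambda>1 \<Lambda>1 \<Lambda>2"

definition U2 :: "real \<Rightarrow> real \<Rightarrow> real \<Rightarrow> real" where
  "U2 \<alpha> \<Lambda>1 \<Lambda>2 = rag_payoff \<alpha> \<Lambda>2 \<Lambda>1 \<Lambda>2"

definition nash_eq :: "real \<Rightarrow> real \<Rightarrow> real \<Rightarrow> real \<Rightarrow> real \<Rightarrow> bool" where
  "nash_eq \<alpha> N1 N2 L1 L2 \<longleftrightarrow>
     L1 \<in> {0..N1} \<and> L2 \<in> {0..N2} \<and>
     (\<forall>x\<in>{0..N1}. U1 \<alpha> x L2 \<le> U1 \<alpha> L1 L2) \<and>
     (\<forall>y\<in>{0..N2}. U2 \<alpha> L1 y \<le> U2 \<alpha> L1 L2)"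

end

theory Submission
  imports Defs
begin

lemma ln_conc:
  fixes \<mu> b :: real assumes "0 \<le> \<mu>" "\<mu> \<le> 1" "0 \<le> b"
  shows "\<mu> * ln (1 + b) \<le> ln (1 + \<mu> * b)"
proof -
  have "(1 - \<mu>) * ln 1 + \<mu> * ln (1+b) \<le> ln ((1 - \<mu>) *\<^sub>R 1 + \<mu> *\<^sub>R (1+b))"
    by (rule concave_onD[OF ln_concave]) (use assms in auto)
  moreover have "(1 - \<mu>) *\<^sub>R 1 + \<mu> *\<^sub>R (1+b) = 1 + \<mu> * b" by (simp add: algebra_simps)
  ultimately show ?thesis by (simp add: algebra_simps)
qed

lemma ua_bound:
  fixes a u :: real assumes "a > 0" "u > 0"
  shows "u powr a * exp (- u) \<le> a powr a * exp (- a)"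
proof -
  have "ln (u / a) \<le> u / a - 1" using assms by (intro ln_le_minus_one) auto
  hence "a * ln (u/a) \<le> a * (u/a - 1)" using assms by (intro mult_left_mono) auto
  hence "a * ln u - u \<le> a * ln a - a" using assms by (simp add: ln_div algebra_simps)
  hence "exp (a * ln u - u) \<le> exp (a * ln a - a)" by simp
  thus ?thesis using assms by (simp add: powr_def exp_diff exp_minus divide_inverse)
qed

lemma fderiv:
  fixes a y t :: real assumes "t + y > 0"
  shows "DERIV (\<lambda>t. t * (t+y) powr (-a)) t :> (t+y) powr (-a-1) * (y - (a - 1) * t)"
proof -
  have "DERIV (\<lambda>t. t * (t+y) powr (-a)) t :> 1 * (t+y) powr (-a) + t * ((-a) * (t+y) powr (-a - 1) * 1)"
    using assms by (intro derivative_eq_intros) auto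
  moreover have "(t+y) powr (-a) = (t+y) powr (-a-1) * (t+y)"
  proof -
    have "(t+y) powr (-a-1) * (t+y) powr 1 = (t+y) powr (-a - 1 + 1)" by (rule powr_add[symmetric])
    thus ?thesis using assms by simp
  qed
  ultimately show ?thesis by (simp add: algebra_simps)
qed

lemma f_incr:
  fixes a y x x' :: real assumes "y > 0" "a > 1" "0 \<le> x" "x < x'" "x' \<le> y / (a - 1)"
  shows "x * (x+y) powr (-a) < x' * (x'+y) powr (-a)"
proof (rule DERIV_pos_imp_increasing_open[OF assms(4)])
  fix t assume t: "x < t" "t < x'"
  have "(a-1) * t < (a-1) * (y / (a-1))" using t assms by (intro mult_strict_left_mono) auto
  hence "y - (a-1)*t > 0" using assms by simp
  moreover have "(t+y) powr (-a-1) > 0" using t assms by simp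
  ultimately show "\<exists>d. DERIV (\<lambda>t. t * (t+y) powr (-a)) t :> d \<and> d > 0"
    using fderiv[of t y a] t assms by (intro exI[of _ "(t+y) powr (-a-1) * (y - (a - 1) * t)"]) auto
next
  show "continuous_on {x..x'} (\<lambda>t. t * (t+y) powr (-a))"
    using assms by (intro continuous_at_imp_continuous_on ballI DERIV_isCont[OF fderiv]) auto
qed

lemma f_decr:
  fixes a y x x' :: real assumes "y > 0" "a > 1" "y / (a - 1) \<le> x" "x < x'"
  shows "x' * (x'+y) powr (-a) < x * (x+y) powr (-a)"
proof (rule DERIV_neg_imp_decreasing_open[OF assms(4)])
  have y0: "y / (a-1) > 0" using assms by simp
  fix t assume t: "x < t" "t < x'"
  have "(a-1) * (y / (a-1)) < (a-1) * t" using t assms by (intro mult_strict_left_mono) auto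
  hence neg: "y - (a-1)*t < 0" using assms by simp
  have tp: "t + y > 0" using t assms y0 by linarith
  moreover have "(t+y) powr (-a-1) > 0" using tp by simp
  ultimately show "\<exists>d. DERIV (\<lambda>t. t * (t+y) powr (-a)) t :> d \<and> d < 0"
    using fderiv[OF tp, of a] neg by (intro exI[of _ "(t+y) powr (-a-1) * (y - (a - 1) * t)"])
      (auto simp: mult_pos_neg)
next
  have y0: "y / (a-1) > 0" using assms by simp
  show "continuous_on {x..x'} (\<lambda>t. t * (t+y) powr (-a))"
  proof (intro continuous_at_imp_continuous_on ballI DERIV_isCont[OF fderiv])
    fix t assume "t \<in> {x..x'}" hence "x \<le> t" by simp
    thus "t + y > 0" using assms(1,3) y0 by linarith
  qed
qed

definition gg :: "real \<Rightarrow> real \<Rightarrow> real" where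
  "gg \<alpha> T = Sup {ln (1 + \<beta>) * exp (- T * \<beta> powr (2 / \<alpha>)) | \<beta>. \<beta> > 0}"

lemma elem_upper:
  fixes \<alpha> T \<beta> :: real assumes "\<alpha> > 0" "T > 0" "\<beta> > 0"
  shows "ln (1 + \<beta>) * exp (- T * \<beta> powr (2 / \<alpha>))
     \<le> ((\<alpha>/2) powr (\<alpha>/2) * exp (-(\<alpha>/2))) * T powr (-(\<alpha>/2))"
proof -
  define s where "s = \<beta> powr (2/\<alpha>)"
  define u where "u = T * s"
  have s0: "s > 0" using assms by (simp add: s_def)
  have u0: "u > 0" using s0 assms by (simp add: u_def)
  have e1: "2/\<alpha> * (\<alpha>/2) = 1" using assms by (simp add: field_simps)
  have b: "s powr (\<alpha>/2) = \<beta>" unfolding s_def powr_powr e1 using assms by simp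
  have us: "u / T = s" using assms by (simp add: u_def)
  have "u powr (\<alpha>/2) * T powr (-(\<alpha>/2)) = (u / T) powr (\<alpha>/2)"
  proof -
    have "(u / T) powr (\<alpha>/2) = u powr (\<alpha>/2) / T powr (\<alpha>/2)"
      by (rule powr_divide)
    thus ?thesis by (simp only: powr_minus divide_inverse)
  qed
  hence b2: "\<beta> = u powr (\<alpha>/2) * T powr (-(\<alpha>/2))" using b us by metis
  have eu: "- T * s = - u" by (simp add: u_def)
  have "ln (1 + \<beta>) * exp (- T * s) \<le> \<beta> * exp (- T * s)"
    using assms by (intro mult_right_mono ln_add_one_self_le_self) auto
  also have "\<dots> = (u powr (\<alpha>/2) * exp (- u)) * T powr (-(\<alpha>/2))" unfolding eu b2 by (simp only: ac_simps)
  also have "\<dots> \<le> ((\<alpha>/2) powr (\<alpha>/2) * exp (-(\<alpha>/2))) * T powr (-(\<alpha>/2))"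
    by (intro mult_right_mono ua_bound) (use assms u0 in auto)
  finally show ?thesis unfolding s_def .
qed

lemma gg_bdd:
  fixes \<alpha> T :: real assumes "\<alpha> > 0" "T > 0"
  shows "bdd_above {ln (1 + \<beta>) * exp (- T * \<beta> powr (2 / \<alpha>)) | \<beta>. \<beta> > 0}"
  by (rule bdd_aboveI[where M="((\<alpha>/2) powr (\<alpha>/2) * exp (-(\<alpha>/2))) * T powr (-(\<alpha>/2))"])
     (use elem_upper[OF assms] in auto)

lemma gg_ne: "{ln (1 + \<beta>) * exp (- T * \<beta> powr (2 / \<alpha>)) | \<beta>. (\<beta>::real) > 0} \<noteq> {}"
  by (auto intro: exI[of _ 1])

lemma gg_ge:
  fixes \<alpha> T \<beta> :: real assumes "\<alpha> > 0" "T > 0" "\<beta> > 0"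
  shows "ln (1 + \<beta>) * exp (- T * \<beta> powr (2 / \<alpha>)) \<le> gg \<alpha> T"
  unfolding gg_def by (rule cSup_upper[OF _ gg_bdd[OF assms(1,2)]]) (use assms in auto)

lemma gg_upper:
  fixes \<alpha> T :: real assumes "\<alpha> > 0" "T > 0"
  shows "gg \<alpha> T \<le> ((\<alpha>/2) powr (\<alpha>/2) * exp (-(\<alpha>/2))) * T powr (-(\<alpha>/2))"
  unfolding gg_def by (rule cSup_least[OF gg_ne]) (use elem_upper[OF assms] in auto)

lemma ln_lower: "(x::real) \<ge> 0 \<Longrightarrow> x / (1 + x) \<le> ln (1 + x)"
proof -
  assume x: "x \<ge> 0"
  have "ln (1 / (1 + x)) \<le> 1 / (1 + x) - 1" using x by (intro ln_le_minus_one) auto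
  moreover have "1 / (1 + x) - 1 = - (x / (1 + x))" using x by (simp add: field_simps)
  ultimately show ?thesis using x by (simp add: ln_div)
qed

lemma gg_lower:
  fixes \<alpha> T :: real assumes "\<alpha> > 0" "T > 0"
  shows "((\<alpha>/2) powr (\<alpha>/2) * exp (-(\<alpha>/2))) * T powr (-(\<alpha>/2))
           / (1 + (\<alpha>/2/T) powr (\<alpha>/2)) \<le> gg \<alpha> T"
proof -
  define b where "b = (\<alpha>/2/T) powr (\<alpha>/2)"
  have b0: "b > 0" using assms by (simp add: b_def)
  have e1: "\<alpha>/2 * (2/\<alpha>) = 1" using assms by (simp add: field_simps)
  have "b powr (2/\<alpha>) = \<alpha>/2/T" unfolding b_def powr_powr e1 using assms by simp
  hence e: "- T * b powr (2/\<alpha>) = -(\<alpha>/2)" using assms by simp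
  have bb: "b = (\<alpha>/2) powr (\<alpha>/2) * T powr (-(\<alpha>/2))"
    unfolding b_def powr_divide by (simp only: powr_minus divide_inverse)
  have "((\<alpha>/2) powr (\<alpha>/2) * exp (-(\<alpha>/2))) * T powr (-(\<alpha>/2)) / (1 + b)
        = b / (1 + b) * exp (-(\<alpha>/2))" by (simp add: bb)
  also have "\<dots> \<le> ln (1 + b) * exp (-(\<alpha>/2))"
    using b0 by (intro mult_right_mono ln_lower) auto
  also have "\<dots> \<le> gg \<alpha> T" using gg_ge[OF assms b0] unfolding e .
  finally show ?thesis by (simp add: b_def)
qed

lemma gg_pos:
  fixes \<alpha> T :: real assumes "\<alpha> > 0" "T > 0" shows "gg \<alpha> T > 0"
proof -
  have "0 < ln (1 + 1) * exp (- T * 1 powr (2 / \<alpha>))" by simp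
  also have "\<dots> \<le> gg \<alpha> T" by (rule gg_ge) (use assms in auto)
  finally show ?thesis .
qed

lemma gg_scale:
  fixes \<alpha> T T' :: real assumes "\<alpha> > 0" "T > 0" "T \<le> T'"
  shows "(T/T') powr (\<alpha>/2) * gg \<alpha> T \<le> gg \<alpha> T'"
proof -
  define \<mu> where "\<mu> = (T/T') powr (\<alpha>/2)"
  have T'0: "T' > 0" using assms by simp
  have mu0: "\<mu> > 0" using assms T'0 by (simp add: \<mu>_def)
  have mu1: "\<mu> \<le> 1" unfolding \<mu>_def using assms T'0 by (intro powr_le1) auto
  have e1: "\<alpha>/2 * (2/\<alpha>) = 1" using assms by (simp add: field_simps)
  have mud: "\<mu> powr (2/\<alpha>) = T/T'" unfolding \<mu>_def powr_powr e1 using assms T'0 by simp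
  have "gg \<alpha> T \<le> gg \<alpha> T' / \<mu>"
    unfolding gg_def[of \<alpha> T]
  proof (rule cSup_least[OF gg_ne])
    fix v assume "v \<in> {ln (1 + \<beta>) * exp (- T * \<beta> powr (2 / \<alpha>)) | \<beta>. \<beta> > 0}"
    then obtain \<beta> where b0: "\<beta> > 0" and v: "v = ln (1 + \<beta>) * exp (- T * \<beta> powr (2 / \<alpha>))" by auto
    have "(\<mu> * \<beta>) powr (2/\<alpha>) = \<mu> powr (2/\<alpha>) * \<beta> powr (2/\<alpha>)"
      by (rule powr_mult)
    hence "- T' * (\<mu> * \<beta>) powr (2/\<alpha>) = - T * \<beta> powr (2 / \<alpha>)" using T'0 by (simp add: mud)
    moreover have "ln (1 + \<mu> * \<beta>) * exp (- T' * (\<mu> * \<beta>) powr (2/\<alpha>)) \<le> gg \<alpha> T'"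
      by (rule gg_ge) (use assms T'0 mu0 b0 in auto)
    ultimately have A1: "ln (1 + \<mu> * \<beta>) * exp (- T * \<beta> powr (2/\<alpha>)) \<le> gg \<alpha> T'" by simp
    have A2: "\<mu> * ln (1 + \<beta>) * exp (- T * \<beta> powr (2/\<alpha>)) \<le> ln (1 + \<mu> * \<beta>) * exp (- T * \<beta> powr (2/\<alpha>))"
      by (intro mult_right_mono ln_conc) (use mu0 mu1 b0 in auto)
    have "\<mu> * v \<le> gg \<alpha> T'" unfolding v using order_trans[OF A2 A1] by (simp add: mult.assoc)
    thus "v \<le> gg \<alpha> T' / \<mu>" using mu0 by (simp add: field_simps)
  qed
  thus ?thesis using mu0 by (simp add: field_simps \<mu>_def)
qed

lemma pay:
  fixes \<alpha> x T :: real assumes "\<alpha> > 0" "x > 0" "T > 0"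
  shows "Sup {x * ln (1 + \<beta>) * exp (- T * \<beta> powr (2 / \<alpha>)) | \<beta>. \<beta> > 0} = x * gg \<alpha> T"
proof (rule antisym)
  have ne: "{x * ln (1 + \<beta>) * exp (- T * \<beta> powr (2 / \<alpha>)) | \<beta>. \<beta> > 0} \<noteq> {}" by (auto intro: exI[of _ 1])
  have up: "\<And>v. v \<in> {x * ln (1 + \<beta>) * exp (- T * \<beta> powr (2 / \<alpha>)) | \<beta>. \<beta> > 0} \<Longrightarrow> v \<le> x * gg \<alpha> T"
  proof -
    fix v assume "v \<in> {x * ln (1 + \<beta>) * exp (- T * \<beta> powr (2 / \<alpha>)) | \<beta>. \<beta> > 0}"
    then obtain \<beta> where b0: "\<beta> > 0" and v: "v = x * (ln (1 + \<beta>) * exp (- T * \<beta> powr (2 / \<alpha>)))" by auto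
    show "v \<le> x * gg \<alpha> T" unfolding v by (intro mult_left_mono gg_ge) (use assms b0 in auto)
  qed
  show "Sup {x * ln (1 + \<beta>) * exp (- T * \<beta> powr (2 / \<alpha>)) | \<beta>. \<beta> > 0} \<le> x * gg \<alpha> T"
    by (rule cSup_least[OF ne up])
  have bdd: "bdd_above {x * ln (1 + \<beta>) * exp (- T * \<beta> powr (2 / \<alpha>)) | \<beta>. \<beta> > 0}"
    by (rule bdd_aboveI[OF up])
  have "gg \<alpha> T \<le> Sup {x * ln (1 + \<beta>) * exp (- T * \<beta> powr (2 / \<alpha>)) | \<beta>. \<beta> > 0} / x"
    unfolding gg_def[of \<alpha> T]
  proof (rule cSup_least[OF gg_ne])
    fix v assume "v \<in> {ln (1 + \<beta>) * exp (- T * \<beta> powr (2 / \<alpha>)) | \<beta>. \<beta> > 0}"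
    then obtain \<beta> where b0: "\<beta> > 0" and v: "v = ln (1 + \<beta>) * exp (- T * \<beta> powr (2 / \<alpha>))" by auto
    have "x * v \<le> Sup {x * ln (1 + \<beta>) * exp (- T * \<beta> powr (2 / \<alpha>)) | \<beta>. \<beta> > 0}"
      by (rule cSup_upper[OF _ bdd]) (use b0 in \<open>auto simp: v mult.assoc\<close>)
    thus "v \<le> Sup {x * ln (1 + \<beta>) * exp (- T * \<beta> powr (2 / \<alpha>)) | \<beta>. \<beta> > 0} / x"
      using assms by (simp add: field_simps)
  qed
  thus "x * gg \<alpha> T \<le> Sup {x * ln (1 + \<beta>) * exp (- T * \<beta> powr (2 / \<alpha>)) | \<beta>. \<beta> > 0}"
    using assms by (simp add: field_simps)
qed

lemma pay0: "Sup {0 * ln (1 + \<beta>) * exp (- T * \<beta> powr (2 / \<alpha>)) | \<beta>. (\<beta>::real) > 0} = (0::real)"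
proof -
  have "{0 * ln (1 + \<beta>) * exp (- T * \<beta> powr (2 / \<alpha>)) | \<beta>. (\<beta>::real) > 0} = {0::real}"
    by (auto intro: exI[of _ 1])
  thus ?thesis by simp
qed

lemma U1_eq:
  fixes \<alpha> x y :: real assumes "\<alpha> > 0" "x \<ge> 0" "x + y > 0"
  shows "U1 \<alpha> x y = x * gg \<alpha> (x + y)"
proof (cases "x = 0")
  case True thus ?thesis unfolding U1_def rag_payoff_def using pay0 by simp
next
  case False thus ?thesis unfolding U1_def rag_payoff_def using pay[of \<alpha> x "x+y"] assms by simp
qed

lemma U2_eq:
  fixes \<alpha> x y :: real assumes "\<alpha> > 0" "y \<ge> 0" "x + y > 0"
  shows "U2 \<alpha> x y = y * gg \<alpha> (x + y)"
proof (cases "y = 0")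
  case True thus ?thesis unfolding U2_def rag_payoff_def using pay0 by simp
next
  case False thus ?thesis unfolding U2_def rag_payoff_def using pay[of \<alpha> y "x+y"] assms by simp
qed

lemma U1_00: "U1 \<alpha> 0 0 = 0"
  unfolding U1_def rag_payoff_def using pay0 by simp

lemma dev:
  fixes \<alpha> x x' y :: real assumes "\<alpha> > 2" "y > 0" "0 \<le> x" "x < x'" "x' \<le> y / (\<alpha>/2 - 1)"
  shows "x * gg \<alpha> (x + y) < x' * gg \<alpha> (x' + y)"
proof -
  define T where "T = x + y"
  define T' where "T' = x' + y"
  have T0: "T > 0" "T \<le> T'" using assms by (auto simp: T_def T'_def)
  have T'0: "T' > 0" using T0 by simp
  have g0: "gg \<alpha> T > 0" using gg_pos[of \<alpha> T] assms T0 by simp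
  have fi: "x * T powr (-(\<alpha>/2)) < x' * T' powr (-(\<alpha>/2))"
    unfolding T_def T'_def by (rule f_incr) (use assms in auto)
  have sc: "(T/T') powr (\<alpha>/2) = T powr (\<alpha>/2) * T' powr (-(\<alpha>/2))"
  proof -
    have "(T/T') powr (\<alpha>/2) = T powr (\<alpha>/2) / T' powr (\<alpha>/2)" by (rule powr_divide)
    thus ?thesis by (simp only: powr_minus divide_inverse)
  qed
  have one: "T powr (\<alpha>/2) * T powr (-(\<alpha>/2)) = 1"
  proof -
    have "T powr (\<alpha>/2) * T powr (-(\<alpha>/2)) = T powr (\<alpha>/2 + -(\<alpha>/2))" by (rule powr_add[symmetric])
    thus ?thesis using T0 by simp
  qed
  have Tp: "T powr (\<alpha>/2) > 0" using T0 by simp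
  have "x * gg \<alpha> T = T powr (\<alpha>/2) * (x * T powr (-(\<alpha>/2))) * gg \<alpha> T"
    using one by (simp add: algebra_simps)
  also have "\<dots> < T powr (\<alpha>/2) * (x' * T' powr (-(\<alpha>/2))) * gg \<alpha> T"
    using fi Tp g0 by (intro mult_strict_right_mono mult_strict_left_mono) auto
  also have "\<dots> = x' * ((T/T') powr (\<alpha>/2) * gg \<alpha> T)" unfolding sc by (simp add: algebra_simps)
  also have "\<dots> \<le> x' * gg \<alpha> T'"
    using gg_scale[of \<alpha> T T'] assms T0 by (intro mult_left_mono) auto
  finally show ?thesis by (simp add: T_def T'_def)
qed

lemma L1_full:
  fixes \<alpha> c N L1 L2 :: real
  assumes a2: "2 < \<alpha>" and a4: "\<alpha> < 4" and c1: "c \<ge> 1" and N0: "N > 0"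
    and ne: "nash_eq \<alpha> N (c * N) L1 L2"
  shows "L1 = N \<and> (L2 = c * N \<or> L2 \<ge> N / (\<alpha>/2 - 1))"
proof -
  have al0: "\<alpha> > 0" using a2 by simp
  have am: "\<alpha>/2 - 1 > 0" "\<alpha>/2 - 1 < 1" using a2 a4 by auto
  have cN: "c * N \<ge> N" using c1 N0 by simp
  have L1r: "0 \<le> L1" "L1 \<le> N" and L2r: "0 \<le> L2" "L2 \<le> c * N"
    and BR1: "\<And>x. x \<in> {0..N} \<Longrightarrow> U1 \<alpha> x L2 \<le> U1 \<alpha> L1 L2"
    and BR2: "\<And>y. y \<in> {0..c*N} \<Longrightarrow> U2 \<alpha> L1 y \<le> U2 \<alpha> L1 L2"
    using ne unfolding nash_eq_def by auto
  have P1: False if h: "L1 < N" "L2 > 0" "L1 < L2 / (\<alpha>/2 - 1)"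
  proof -
    define x' where "x' = min N (L2 / (\<alpha>/2 - 1))"
    have x'r: "L1 < x'" "x' \<le> N" "x' \<le> L2 / (\<alpha>/2 - 1)" using h by (auto simp: x'_def)
    have "L1 * gg \<alpha> (L1 + L2) < x' * gg \<alpha> (x' + L2)"
      by (rule dev) (use a2 h L1r x'r in auto)
    moreover have "U1 \<alpha> x' L2 = x' * gg \<alpha> (x' + L2)" by (rule U1_eq) (use al0 L1r x'r h in auto)
    moreover have "U1 \<alpha> L1 L2 = L1 * gg \<alpha> (L1 + L2)" by (rule U1_eq) (use al0 L1r h in auto)
    moreover have "U1 \<alpha> x' L2 \<le> U1 \<alpha> L1 L2" by (rule BR1) (use x'r L1r in auto)
    ultimately show False by simp
  qed
  have P2: False if h: "L2 < c * N" "L1 > 0" "L2 < L1 / (\<alpha>/2 - 1)"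
  proof -
    define y' where "y' = min (c * N) (L1 / (\<alpha>/2 - 1))"
    have y'r: "L2 < y'" "y' \<le> c * N" "y' \<le> L1 / (\<alpha>/2 - 1)" using h by (auto simp: y'_def)
    have "L2 * gg \<alpha> (L2 + L1) < y' * gg \<alpha> (y' + L1)"
      by (rule dev) (use a2 h L2r y'r in auto)
    moreover have "U2 \<alpha> L1 y' = y' * gg \<alpha> (L1 + y')" by (rule U2_eq) (use al0 L2r y'r h in auto)
    moreover have "U2 \<alpha> L1 L2 = L2 * gg \<alpha> (L1 + L2)" by (rule U2_eq) (use al0 L2r h in auto)
    moreover have "U2 \<alpha> L1 y' \<le> U2 \<alpha> L1 L2" by (rule BR2) (use y'r L2r in auto)
    ultimately show False by (simp add: add.commute)
  qed
  have P0: False if h: "L1 = 0" "L2 = 0"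
  proof -
    have "U1 \<alpha> N L2 = N * gg \<alpha> N" using U1_eq[of \<alpha> N L2] al0 N0 h by simp
    moreover have "N * gg \<alpha> N > 0" using gg_pos[OF al0 N0] N0 by simp
    moreover have "U1 \<alpha> N L2 \<le> U1 \<alpha> L1 L2" by (rule BR1) (use N0 in auto)
    ultimately show False using h U1_00 by simp
  qed
  have L1N: "L1 = N"
  proof (rule ccontr)
    assume "L1 \<noteq> N" hence lt: "L1 < N" using L1r by simp
    show False
    proof (cases "L2 = 0")
      case True
      hence "L1 > 0" using P0 L1r by force
      thus False using P2 True N0 c1 am
        by (smt (verit) divide_pos_pos mult_pos_pos)
    next
      case False
      hence L2p: "L2 > 0" using L2r by simp
      have "L1 \<ge> L2 / (\<alpha>/2 - 1)" using P1 lt L2p by force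
      moreover have "L2 / (\<alpha>/2 - 1) > L2" using L2p am by (simp add: field_simps)
      ultimately have g: "L1 > L2" "L1 > 0" using L2p by auto
      have "L2 \<ge> L1 / (\<alpha>/2 - 1)" using P2 g cN lt by force
      moreover have "L1 / (\<alpha>/2 - 1) > L1" using g am by (simp add: field_simps)
      ultimately show False using g by simp
    qed
  qed
  moreover have "L2 = c * N \<or> L2 \<ge> N / (\<alpha>/2 - 1)"
    using P2 L1N N0 L2r by force
  ultimately show ?thesis by simp
qed

lemma hom:
  fixes N t a :: real assumes "N > 0" "t \<ge> 0"
  shows "(t * N) * (t * N + N) powr (-a) = N powr (1 - a) * (t * (t + 1) powr (-a))"
proof -
  have "(t * N + N) powr (-a) = N powr (-a) * (t + 1) powr (-a)"
  proof -
    have "(N * (t + 1)) powr (-a) = N powr (-a) * (t + 1) powr (-a)" by (rule powr_mult)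
    thus ?thesis by (simp add: algebra_simps)
  qed
  moreover have "N * N powr (-a) = N powr (1 - a)"
  proof -
    have "N powr 1 * N powr (-a) = N powr (1 + -a)" by (rule powr_add[symmetric])
    thus ?thesis using assms by simp
  qed
  ultimately show ?thesis by (simp add: algebra_simps)
qed

lemma key_ineq:
  fixes \<alpha> c N L2 \<epsilon> :: real
  assumes a2: "2 < \<alpha>" and a4: "\<alpha> < 4" and N0: "N > 0" and e0: "\<epsilon> > 0"
    and kc: "1 / (\<alpha>/2 - 1) < c"
    and L2r: "L2 \<le> c * N"
    and BR2: "\<And>y. y \<in> {0..c*N} \<Longrightarrow> U2 \<alpha> N y \<le> U2 \<alpha> N L2"
    and big: "L2 > (1 / (\<alpha>/2 - 1) + \<epsilon>) * N"
  shows "(1 / (\<alpha>/2 - 1)) * ((1 / (\<alpha>/2 - 1)) + 1) powr (-(\<alpha>/2))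
           / (1 + (\<alpha>/2 / (N * (1 + 1 / (\<alpha>/2 - 1)))) powr (\<alpha>/2))
         < (1 / (\<alpha>/2 - 1) + \<epsilon>) * ((1 / (\<alpha>/2 - 1) + \<epsilon>) + 1) powr (-(\<alpha>/2))"
proof -
  define k where "k = 1 / (\<alpha>/2 - 1)"
  define G where "G = (\<alpha>/2) powr (\<alpha>/2) * exp (-(\<alpha>/2))"
  define B where "B = 1 + (\<alpha>/2 / (N * (1 + k))) powr (\<alpha>/2)"
  have al0: "\<alpha> > 0" using a2 by simp
  have k0: "k > 0" using a2 by (simp add: k_def)
  have G0: "G > 0" using al0 by (simp add: G_def)
  have B0: "B > 0" by (simp add: B_def add_pos_nonneg)
  have L2p: "L2 > 0" using big k0 e0 N0 unfolding k_def[symmetric] by (smt (verit) mult_pos_pos)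
  have kN: "k * N \<in> {0..c*N}" using kc k0 N0 unfolding k_def[symmetric] by auto
  have "U2 \<alpha> N (k * N) = (k * N) * gg \<alpha> (N + k * N)" by (rule U2_eq) (use al0 k0 N0 in \<open>auto intro: add_pos_pos\<close>)
  also have "\<dots> \<ge> (k * N) * (G * (N + k * N) powr (-(\<alpha>/2)) / B)"
  proof -
    have "N + k * N = N * (1 + k)" by (simp add: algebra_simps)
    hence "G * (N + k * N) powr (-(\<alpha>/2)) / B \<le> gg \<alpha> (N + k * N)"
      using gg_lower[of \<alpha> "N + k * N"] al0 N0 k0 unfolding G_def B_def by (simp add: add_pos_pos)
    thus ?thesis using k0 N0 by (intro mult_left_mono) auto
  qed
  finally have lo: "(k * N) * (G * (N + k * N) powr (-(\<alpha>/2)) / B) \<le> U2 \<alpha> N (k * N)" .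
  have "U2 \<alpha> N L2 = L2 * gg \<alpha> (N + L2)" by (rule U2_eq) (use al0 L2p N0 in auto)
  also have "\<dots> \<le> L2 * (G * (N + L2) powr (-(\<alpha>/2)))"
    using gg_upper[of \<alpha> "N + L2"] al0 N0 L2p unfolding G_def by (intro mult_left_mono) auto
  finally have hi: "U2 \<alpha> N L2 \<le> L2 * (G * (N + L2) powr (-(\<alpha>/2)))" .
  have fd: "L2 * (L2 + N) powr (-(\<alpha>/2)) < ((k + \<epsilon>) * N) * ((k + \<epsilon>) * N + N) powr (-(\<alpha>/2))"
  proof (rule f_decr)
    show "N / (\<alpha>/2 - 1) \<le> (k + \<epsilon>) * N" using e0 N0 by (simp add: k_def algebra_simps)
  qed (use N0 a2 big k_def in auto)
  have "(k * N) * (k * N + N) powr (-(\<alpha>/2)) * (G / B)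
        = (k * N) * (G * (N + k * N) powr (-(\<alpha>/2)) / B)" by (simp add: algebra_simps)
  also have "\<dots> \<le> L2 * (G * (N + L2) powr (-(\<alpha>/2)))"
    using lo hi BR2[OF kN] by linarith
  also have "\<dots> = L2 * (L2 + N) powr (-(\<alpha>/2)) * G" by (simp add: algebra_simps)
  also have "\<dots> < ((k + \<epsilon>) * N) * ((k + \<epsilon>) * N + N) powr (-(\<alpha>/2)) * G"
    using fd G0 by simp
  finally have "(k * N) * (k * N + N) powr (-(\<alpha>/2)) * (G / B)
       < ((k + \<epsilon>) * N) * ((k + \<epsilon>) * N + N) powr (-(\<alpha>/2)) * G" .
  hence "N powr (1 - \<alpha>/2) * (k * (k + 1) powr (-(\<alpha>/2))) * (G / B)
       < N powr (1 - \<alpha>/2) * ((k + \<epsilon>) * (k + \<epsilon> + 1) powr (-(\<alpha>/2))) * G"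
    using hom[of N k "\<alpha>/2"] hom[of N "k + \<epsilon>" "\<alpha>/2"] N0 k0 e0 by simp
  hence "((k * (k + 1) powr (-(\<alpha>/2))) / B) * (N powr (1 - \<alpha>/2) * G)
       < ((k + \<epsilon>) * (k + \<epsilon> + 1) powr (-(\<alpha>/2))) * (N powr (1 - \<alpha>/2) * G)"
    by (simp add: algebra_simps)
  moreover have "N powr (1 - \<alpha>/2) * G > 0" using N0 G0 by simp
  ultimately have "(k * (k + 1) powr (-(\<alpha>/2))) / B < ((k + \<epsilon>) * (k + \<epsilon> + 1) powr (-(\<alpha>/2)))"
    by (meson mult_less_cancel_right_pos)
  thus ?thesis unfolding B_def k_def by simp
qed

lemma lim_B:
  fixes a k :: real assumes "a > 0" "k > 0"
  shows "((\<lambda>N. 1 + (a / (N * (1 + k))) powr a) \<longlongrightarrow> 1) at_top"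
proof -
  have f: "filterlim (\<lambda>N::real. N * (1 + k)) at_top at_top"
    by (rule filterlim_at_top_mult_tendsto_pos[OF tendsto_const]) (use assms in \<open>auto intro: filterlim_ident\<close>)
  have "((\<lambda>N. a / (N * (1 + k))) \<longlongrightarrow> 0) at_top"
    by (rule tendsto_divide_0[OF tendsto_const filterlim_at_top_imp_at_infinity[OF f]])
  hence "((\<lambda>N. (a / (N * (1 + k))) powr a) \<longlongrightarrow> 0) at_top"
  proof (rule tendsto_zero_powrI)
    show "((\<lambda>N. a) \<longlongrightarrow> a) at_top" by simp
    show "\<forall>\<^sub>F x in at_top. 0 \<le> a / (x * (1 + k))"
      using eventually_gt_at_top[of 0] by eventually_elim (use assms in auto)
  qed (use assms in auto)
  hence "((\<lambda>N. 1 + (a / (N * (1 + k))) powr a) \<longlongrightarrow> 1 + 0) at_top"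
    by (intro tendsto_add tendsto_const)
  thus ?thesis by simp
qed

theorem theorem3:
  fixes \<alpha> c :: real and L1 L2 :: "real \<Rightarrow> real"
  assumes "2 < \<alpha>" and "\<alpha> < 4" and "c \<ge> 1"
    and "\<forall>N1>0. nash_eq \<alpha> N1 (c * N1) (L1 N1) (L2 N1)"
  shows "(\<forall>\<^sub>F N1 in at_top. L1 N1 = N1) \<and>
         ((\<lambda>N1. L2 N1 / N1) \<longlongrightarrow> min c (2 / (\<alpha> - 2))) at_top"
proof -
  note a2 = assms(1) and a4 = assms(2) and c1 = assms(3) and NE = assms(4)
  define k where "k = 1 / (\<alpha>/2 - 1)"
  have k0: "k > 0" using a2 by (simp add: k_def)
  have kk: "2 / (\<alpha> - 2) = k" unfolding k_def using a2 by (simp add: field_simps)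
  have full: "\<And>N. N > 0 \<Longrightarrow> L1 N = N \<and> (L2 N = c * N \<or> L2 N \<ge> N / (\<alpha>/2 - 1))"
    using L1_full[OF a2 a4 c1] NE by blast
  have ev1: "\<forall>\<^sub>F N1 in at_top. L1 N1 = N1"
    using eventually_gt_at_top[of 0] by eventually_elim (use full in blast)
  have lowq: "\<And>N. N > 0 \<Longrightarrow> L2 N / N \<ge> min c k"
  proof -
    fix N :: real assume N0: "N > 0"
    from full[OF N0] have "L2 N = c * N \<or> L2 N \<ge> k * N" by (simp add: k_def)
    hence "min c k * N \<le> L2 N" using N0
      by (metis min.cobounded1 min.cobounded2 mult_right_mono less_imp_le order_trans order_refl)
    thus "L2 N / N \<ge> min c k" using N0 by (simp add: field_simps)
  qed
  have upq: "\<And>N. N > 0 \<Longrightarrow> L2 N / N \<le> c"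
  proof -
    fix N :: real assume N0: "N > 0"
    have "L2 N \<le> c * N" using NE N0 unfolding nash_eq_def by auto
    thus "L2 N / N \<le> c" using N0 by (simp add: field_simps)
  qed
  have lim: "((\<lambda>N1. L2 N1 / N1) \<longlongrightarrow> min c k) at_top"
  proof (rule order_tendstoI)
    fix a' assume a': "a' < min c k"
    show "\<forall>\<^sub>F x in at_top. a' < L2 x / x"
      using eventually_gt_at_top[of 0] by eventually_elim (use lowq a' in force)
  next
    fix b' assume b': "min c k < b'"
    show "\<forall>\<^sub>F x in at_top. L2 x / x < b'"
    proof (cases "c \<le> k")
      case True
      show ?thesis using eventually_gt_at_top[of 0] by eventually_elim (use upq b' True in force)
    next
      case False
      hence kc: "k < c" by simp
      define \<epsilon> where "\<epsilon> = (b' - k) / 2"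
      have e0: "\<epsilon> > 0" using b' kc by (simp add: \<epsilon>_def)
      have kb: "k < b'" using b' kc by simp
      have ek: "k + \<epsilon> < b'" unfolding \<epsilon>_def using kb by (simp add: field_simps)
      have dec: "(k + \<epsilon>) * ((k + \<epsilon>) + 1) powr (-(\<alpha>/2)) < k * (k + 1) powr (-(\<alpha>/2))"
        by (rule f_decr) (use a2 e0 in \<open>auto simp: k_def\<close>)
      have "((\<lambda>N. k * (k + 1) powr (-(\<alpha>/2)) / (1 + (\<alpha>/2 / (N * (1 + k))) powr (\<alpha>/2)))
             \<longlongrightarrow> k * (k + 1) powr (-(\<alpha>/2)) / 1) at_top"
        by (intro tendsto_divide tendsto_const lim_B) (use a2 k0 in auto)
      hence "\<forall>\<^sub>F N in at_top. (k + \<epsilon>) * ((k + \<epsilon>) + 1) powr (-(\<alpha>/2))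
               < k * (k + 1) powr (-(\<alpha>/2)) / (1 + (\<alpha>/2 / (N * (1 + k))) powr (\<alpha>/2))"
        using dec by (intro order_tendstoD(1)) auto
      thus ?thesis using eventually_gt_at_top[of 0]
      proof eventually_elim
        case (elim N)
        have "\<not> L2 N > (k + \<epsilon>) * N"
        proof
          assume big: "L2 N > (k + \<epsilon>) * N"
          have "k * (k + 1) powr (-(\<alpha>/2)) / (1 + (\<alpha>/2 / (N * (1 + k))) powr (\<alpha>/2))
                 < (k + \<epsilon>) * ((k + \<epsilon>) + 1) powr (-(\<alpha>/2))"
            unfolding k_def
          proof (rule key_ineq[OF a2 a4 elim(2) e0])
            show "1 / (\<alpha>/2 - 1) < c" using kc by (simp add: k_def)
            show "L2 N \<le> c * N" using NE elim(2) unfolding nash_eq_def by auto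
            show "L2 N > (1 / (\<alpha>/2 - 1) + \<epsilon>) * N" using big by (simp add: k_def)
            fix y assume "y \<in> {0..c*N}"
            thus "U2 \<alpha> N y \<le> U2 \<alpha> N (L2 N)"
              using NE elim(2) full[OF elim(2)] unfolding nash_eq_def by metis
          qed
          thus False using elim(1) by simp
        qed
        hence "L2 N / N \<le> k + \<epsilon>" using elim(2) by (simp add: field_simps)
        thus ?case using ek by simp
      qed
    qed
  qed
  show ?thesis using ev1 lim kk by simp
qed

end
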